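(* In the setting described in the context, suppose $T_{\mathrm{renorm}}\ge\ln\!\big(\frac{b_2\|f\|_\infty T_{\mathrm{sel}}}{b_1}\big)(b_2a_0)^{-1}$ and the bounded-flux assumption holds. Then for all $t\in[T^0_1,T^2_M]$ and $j\in\bar J_n$, $s_0-w^j(T^0_1)\Phi^j(t)\ge\delta$.
   Context: Let $I$ be a finite set, $n\in\{1,\dots,|I|\}$, $J_n$ the set of $n$-element subsets of $I$. Input concentrations $x^i\ge0$, $i\in I$, are prescribed functions of time, continuous on $[0,T_{\mathrm{sel}}]$; flux $\Phi^j(t):=\prod_{i\in j}x^i(t)$. Positive constants $a_0,b_1,b_2,s_0,\theta,\rho,T_{\mathrm{sel}},T_{\mathrm{renorm}}$; $f:[0,\infty)\to[0,\infty)$ continuous, $f\equiv0$ on $[0,\theta]$, increasing on $(\theta,\theta+\rho)$, $f\equiv\|f\|_\infty$ on $[\theta+\rho,\infty)$. $\bar J_n$ (assumed nonempty) is the set of $j\in J_n$ such that $\Phi^j>\theta$ on some $[t_0,t_1]\subset[0,T_{\mathrm{sel}}]$ with $t_0<t_1$. $T^0_1:=T_{\mathrm{sel}}+T_{\mathrm{renorm}}$. For $j\in\bar J_n$: $w^j(0)=0$, $\dot w^j=f(\Phi^j)$ on $[0,T_{\mathrm{sel}}]$, $\dot w^j=a_0(b_1-b_2w^j)$ on $[T_{\mathrm{sel}},T^0_1]$, and $w^j$ is constant afterwards (so $x^j(t):=w^j(T^0_1)\Phi^j(t)$ for $t\ge T^0_1$). $T^2_M>T^0_1$ denotes the end of the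 learning phase. Bounded-flux assumption: there is $\alpha>0$ with $\sup_{j\in\bar J_n,\,t\in[T^0_1,T^2_M]}\Phi^j(t)\le\alpha$, and $\delta:=s_0-2\frac{b_1}{b_2}\alpha>0$. *)

theory Defs
  imports "HOL-Analysis.Analysis"
begin

text \<open>Flux of a reaction j (an n-element subset of inputs): product of input concentrations.\<close>
definition Phi :: "('i \<Rightarrow> real \<Rightarrow> real) \<Rightarrow> 'i set \<Rightarrow> real \<Rightarrow> real" where
  "Phi x j t = (\<Prod>i\<in>j. x i t)"

definition Jn :: "'i set \<Rightarrow> nat \<Rightarrow> 'i set set" where
  "Jn I n = {j. j \<subseteq> I \<and> card j = n}"

definition Jbar :: "'i set \<Rightarrow> nat \<Rightarrow> ('i \<Rightarrow> real \<Rightarrow> real) \<Rightarrow> real \<Rightarrow> real \<Rightarrow> 'i set set" where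
  "Jbar I n x \<theta> Tsel = {j \<in> Jn I n. \<exists>t0 t1. 0 \<le> t0 \<and> t0 < t1 \<and> t1 \<le> Tsel \<and>
                                  (\<forall>t\<in>{t0..t1}. Phi x j t > \<theta>)}"

end

theory Submission
  imports Defs
begin

theorem proposition18:
  fixes I :: "'i set" and n :: nat
    and x :: "'i \<Rightarrow> real \<Rightarrow> real"
    and f :: "real \<Rightarrow> real"
    and w :: "'i set \<Rightarrow> real \<Rightarrow> real"
    and a0 b1 b2 s0 \<theta> \<rho> Tsel Trenorm T2M \<alpha> :: real
  assumes finI: "finite I"
    and n_range: "1 \<le> n" "n \<le> card I"
    and x_nonneg: "\<And>i t. i \<in> I \<Longrightarrow> 0 \<le> t \<Longrightarrow> 0 \<le> x i t"
    and x_cont: "\<And>i. i \<in> I \<Longrightarrow> continuous_on {0..Tsel} (x i)"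
    and pos: "a0 > 0" "b1 > 0" "b2 > 0" "s0 > 0" "\<theta> > 0" "\<rho> > 0" "Tsel > 0" "Trenorm > 0"
    and f_nonneg: "\<And>u. 0 \<le> u \<Longrightarrow> 0 \<le> f u"
    and f_cont: "continuous_on {0..} f"
    and f_zero: "\<And>u. 0 \<le> u \<Longrightarrow> u \<le> \<theta> \<Longrightarrow> f u = 0"
    and f_incr: "strict_mono_on {\<theta><..<\<theta>+\<rho>} f"
    and f_sat: "\<And>u. \<theta> + \<rho> \<le> u \<Longrightarrow> f u = (SUP v\<in>{0..}. f v)"
    and Jbar_ne: "Jbar I n x \<theta> Tsel \<noteq> {}"
    and w_init: "\<And>j. j \<in> Jbar I n x \<theta> Tsel \<Longrightarrow> w j 0 = 0"
    and w_sel: "\<And>j t. j \<in> Jbar I n x \<theta> Tsel \<Longrightarrow> t \<in> {0..Tsel} \<Longrightarrow>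
                  (w j has_real_derivative f (Phi x j t)) (at t within {0..Tsel})"
    and w_renorm: "\<And>j t. j \<in> Jbar I n x \<theta> Tsel \<Longrightarrow> t \<in> {Tsel..Tsel + Trenorm} \<Longrightarrow>
                  (w j has_real_derivative a0 * (b1 - b2 * w j t)) (at t within {Tsel..Tsel + Trenorm})"
    and w_const: "\<And>j t. j \<in> Jbar I n x \<theta> Tsel \<Longrightarrow> t \<ge> Tsel + Trenorm \<Longrightarrow>
                  w j t = w j (Tsel + Trenorm)"
    and T2M_gt: "T2M > Tsel + Trenorm"
    and Trenorm_bound: "Trenorm \<ge> ln (b2 * (SUP v\<in>{0..}. f v) * Tsel / b1) / (b2 * a0)"
    and alpha_pos: "\<alpha> > 0"
    and flux_bound: "\<And>j t. j \<in> Jbar I n x \<theta> Tsel \<Longrightarrow> t \<in> {Tsel + Trenorm..T2M} \<Longrightarrow> Phi x j t \<le> \<alpha>"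
    and delta_pos: "s0 - 2 * (b1 / b2) * \<alpha> > 0"
  shows "\<forall>t\<in>{Tsel + Trenorm..T2M}. \<forall>j\<in>Jbar I n x \<theta> Tsel.
           s0 - w j (Tsel + Trenorm) * Phi x j t \<ge> s0 - 2 * (b1 / b2) * \<alpha>"
proof (intro ballI)
  fix t j assume t: "t \<in> {Tsel + Trenorm..T2M}" and j: "j \<in> Jbar I n x \<theta> Tsel"
  define F where "F = (SUP v\<in>{0..}. f v)"
  have jI: "j \<subseteq> I" using j unfolding Jbar_def Jn_def by auto
  have Phi_nn: "\<And>s. 0 \<le> s \<Longrightarrow> 0 \<le> Phi x j s"
    unfolding Phi_def using jI x_nonneg by (auto intro!: prod_nonneg)
  have sub: "f ` {0..} \<subseteq> f ` {0..\<theta>+\<rho>}"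
  proof
    fix y assume "y \<in> f ` {0..}"
    then obtain u where u: "u \<ge> 0" "y = f u" by auto
    show "y \<in> f ` {0..\<theta>+\<rho>}"
    proof (cases "u \<le> \<theta>+\<rho>")
      case True then show ?thesis using u by auto
    next
      case False
      then have "f u = f (\<theta>+\<rho>)" using f_sat[of u] f_sat[of "\<theta>+\<rho>"] by simp
      moreover have "\<theta>+\<rho> \<in> {0..\<theta>+\<rho>}" using pos by auto
      ultimately show ?thesis using u by auto
    qed
  qed
  have "compact (f ` {0..\<theta>+\<rho>})"
    by (rule compact_continuous_image) (auto intro: continuous_on_subset[OF f_cont])
  then have "bdd_above (f ` {0..\<theta>+\<rho>})" by (auto intro: bounded_imp_bdd_above compact_imp_bounded)
  then have bdd: "bdd_above (f ` {0..})" by (rule bdd_above_mono[OF _ sub])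
  have fF: "\<And>u. 0 \<le> u \<Longrightarrow> f u \<le> F" unfolding F_def using bdd by (auto intro: cSUP_upper)
  have F_nn: "0 \<le> F" using fF[of 0] f_nonneg[of 0] by simp
  have "\<exists>s\<in>{0..Tsel}. w j Tsel - w j 0 = (\<lambda>h. h * f (Phi x j s)) (Tsel - 0)"
    apply (rule mvt_very_simple)
    using pos apply simp
    using w_sel[OF j] by (simp add: has_real_derivative_iff_has_vector_derivative has_vector_derivative_def mult.commute)
  then obtain s where s: "s \<in> {0..Tsel}" "w j Tsel = Tsel * f (Phi x j s)"
    using w_init[OF j] by auto
  have wsel: "w j Tsel \<le> F * Tsel"
    using s fF[OF Phi_nn[of s]] pos by (simp add: mult.commute mult_left_mono)
  define k where "k = a0 * b2"
  have kpos: "k > 0" unfolding k_def using pos by simp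
  define g where "g = (\<lambda>s. (w j s - b1/b2) * exp (k * (s - Tsel)))"
  have "\<exists>c. \<forall>s\<in>{Tsel..Tsel+Trenorm}. g s = c"
  proof (rule has_field_derivative_zero_constant)
    fix s assume s: "s \<in> {Tsel..Tsel+Trenorm}"
    have "(g has_field_derivative (a0 * (b1 - b2 * w j s)) * exp (k * (s - Tsel)) + (w j s - b1/b2) * (exp (k * (s - Tsel)) * k)) (at s within {Tsel..Tsel+Trenorm})"
      unfolding g_def
      by (auto intro!: derivative_eq_intros w_renorm[OF j s])
    moreover have "(a0 * (b1 - b2 * w j s)) * exp (k * (s - Tsel)) + (w j s - b1/b2) * (exp (k * (s - Tsel)) * k) = 0"
      unfolding k_def using pos by (simp add: field_simps)
    ultimately show "(g has_field_derivative 0) (at s within {Tsel..Tsel+Trenorm})" by simp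
  qed auto
  then obtain c where c: "\<forall>s\<in>{Tsel..Tsel+Trenorm}. g s = c" by blast
  have "g (Tsel+Trenorm) = g Tsel" using c pos by auto
  then have eq: "(w j (Tsel+Trenorm) - b1/b2) * exp (k * Trenorm) = w j Tsel - b1/b2"
    unfolding g_def by simp
  have bnd: "F * Tsel \<le> b1/b2 * exp (k * Trenorm)"
  proof (cases "F = 0")
    case True then show ?thesis using pos by simp
  next
    case False
    then have Fp: "F > 0" using F_nn by simp
    have arg: "b2 * F * Tsel / b1 > 0" using Fp pos by simp
    have "ln (b2 * F * Tsel / b1) \<le> k * Trenorm"
      using Trenorm_bound kpos unfolding F_def[symmetric] k_def by (simp add: divide_le_eq mult.commute)
    then have "b2 * F * Tsel / b1 \<le> exp (k * Trenorm)"
      using arg by (metis exp_le_cancel_iff exp_ln)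
    then show ?thesis using pos by (simp add: field_simps)
  qed
  have "(w j (Tsel+Trenorm) - b1/b2) * exp (k * Trenorm) \<le> b1/b2 * exp (k * Trenorm)"
    using eq wsel bnd pos by (smt (verit) divide_pos_pos exp_gt_zero mult_pos_pos)
  then have wT: "w j (Tsel+Trenorm) \<le> 2 * (b1/b2)"
    by (smt (verit) exp_gt_zero mult_le_cancel_right)
  have P0: "0 \<le> Phi x j t" using Phi_nn t pos by auto
  have Pa: "Phi x j t \<le> \<alpha>" using flux_bound[OF j t] .
  have "w j (Tsel+Trenorm) * Phi x j t \<le> 2 * (b1/b2) * \<alpha>"
  proof (cases "w j (Tsel+Trenorm) \<ge> 0")
    case True
    then have "w j (Tsel+Trenorm) * Phi x j t \<le> w j (Tsel+Trenorm) * \<alpha>" using Pa by (simp add: mult_left_mono)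
    also have "\<dots> \<le> 2 * (b1/b2) * \<alpha>" using mult_right_mono[OF wT less_imp_le[OF alpha_pos]] .
    finally show ?thesis .
  next
    case False
    then have "w j (Tsel+Trenorm) * Phi x j t \<le> 0" using P0 by (simp add: mult_nonpos_nonneg)
    also have "0 \<le> 2 * (b1/b2) * \<alpha>" using pos alpha_pos by simp
    finally show ?thesis .
  qed
  then show "s0 - w j (Tsel + Trenorm) * Phi x j t \<ge> s0 - 2 * (b1 / b2) * \<alpha>" by simp
qed

end
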